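(* Let $\mathfrak{S}=(\mathcal{X},\mathsf{S},\gamma,(\Lambda_{a})_{a\in\mathcal{A}})$ be a spectral decomposition system for the Euclidean space $\mathfrak{H}$ and let $\varphi\in\Gamma_0(\mathcal{X})$ be $\mathsf{S}$-invariant. Then: (i) $\varphi\circ\gamma$ is essentially smooth if and only if $\varphi$ is essentially smooth; (ii) $\varphi\circ\gamma$ is essentially strictly convex if and only if $\varphi$ is essentially strictly convex; (iii) $\varphi\circ\gamma$ is a Legendre function if and only if $\varphi$ is a Legendre function.
   Context: A Euclidean space is a finite-dimensional real inner product space; inner products are written $\langle\cdot,\cdot\rangle$ and norms $\|\cdot\|$. Let $\mathfrak{H}$ and $\mathcal{X}$ be Euclidean spaces, let $\mathsf{S}$ be a group acting on $\mathcal{X}$ by linear isometries, let $\gamma\colon\mathfrak{H}\to\mathcal{X}$, and let $(\Lambda_a)_{a\in\mathcal{A}}$ be a family of linear operators from $\mathcal{X}$ to $\mathfrak{H}$. The orbit of $x$ is $\mathsf{S}\cdot x=\{s\cdot x: s\in\mathsf{S}\}$; a map $f$ on $\mathcal{X}$ is $\mathsf{S}$-invariant if $f(s\cdot x)=f(x)$ for all $s,x$. The tuple is a spectral decomposition system for $\mathfrak{H}$ if: [A] every $\Lambda_a$ is an isometry; [B] there exists an $\mathsf{S}$-invariant $\tau\colon\mathcal{X}\to\mathcal{X}$ with $\tau(x)\in\mathsf{S}\cdot x$ for all $x$ and $\gamma\circ\Lambda_a=\tau$ for all $a$; [C] for every $X\in\mathfrak{H}$ there is $a$ with $X=\Lambda_a\gamma(X)$;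 [D] $\langle X,Y\rangle\leq\langle\gamma(X),\gamma(Y)\rangle$ for all $X,Y\in\mathfrak{H}$. $\Gamma_0(\mathcal{H})$ is the set of proper lower semicontinuous convex functions $\mathcal{H}\to\left]-\infty,+\infty\right]$; $\partial g(x)=\{u:\langle z-x,u\rangle+g(x)\leq g(z)\ \forall z\}$. A function $g\in\Gamma_0(\mathcal{H})$ is essentially smooth if $\partial g(x)$ contains at most one element for every $x\in\mathcal{H}$; essentially strictly convex if it is strictly convex on every convex subset of $\operatorname{dom}\partial g=\{x:\partial g(x)\neq\varnothing\}$; a Legendre function if it is both. *)

theory Defs
  imports "HOL-Analysis.Analysis" "HOL-Algebra.Group"
begin

(* Functions H -> ]-oo,+oo] are modelled as maps into ereal. *)

definition proper_fun :: "('a \<Rightarrow> ereal) \<Rightarrow> bool" where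
  "proper_fun f \<longleftrightarrow> (\<forall>x. f x \<noteq> -\<infinity>) \<and> (\<exists>x. f x \<noteq> \<infinity>)"

definition lsc_fun :: "('a::topological_space \<Rightarrow> ereal) \<Rightarrow> bool" where
  "lsc_fun f \<longleftrightarrow> (\<forall>c::ereal. closed {x. f x \<le> c})"

definition convex_fun :: "('a::real_vector \<Rightarrow> ereal) \<Rightarrow> bool" where
  "convex_fun f \<longleftrightarrow> convex {(x, r::real). f x \<le> ereal r}"

definition Gamma0 :: "('a::euclidean_space \<Rightarrow> ereal) set" where
  "Gamma0 = {f. proper_fun f \<and> lsc_fun f \<and> convex_fun f}"

definition subdiff :: "('a::real_inner \<Rightarrow> ereal) \<Rightarrow> 'a \<Rightarrow> 'a set" where
  "subdiff g x = {u. \<forall>z. ereal (inner (z - x) u) + g x \<le> g z}"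

definition dom_subdiff :: "('a::real_inner \<Rightarrow> ereal) \<Rightarrow> 'a set" where
  "dom_subdiff g = {x. subdiff g x \<noteq> {}}"

definition strictly_convex_on_ext :: "'a::real_vector set \<Rightarrow> ('a \<Rightarrow> ereal) \<Rightarrow> bool" where
  "strictly_convex_on_ext C g \<longleftrightarrow>
     (\<forall>x\<in>C. \<forall>y\<in>C. \<forall>t::real. x \<noteq> y \<and> 0 < t \<and> t < 1 \<longrightarrow>
        g (t *\<^sub>R x + (1 - t) *\<^sub>R y) < ereal t * g x + ereal (1 - t) * g y)"

definition essentially_smooth :: "('a::euclidean_space \<Rightarrow> ereal) \<Rightarrow> bool" where
  "essentially_smooth g \<longleftrightarrow> g \<in> Gamma0 \<and> (\<forall>x. \<forall>u\<in>subdiff g x. \<forall>v\<in>subdiff g x. u = v)"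

definition essentially_strictly_convex :: "('a::euclidean_space \<Rightarrow> ereal) \<Rightarrow> bool" where
  "essentially_strictly_convex g \<longleftrightarrow> g \<in> Gamma0 \<and>
     (\<forall>C. convex C \<and> C \<subseteq> dom_subdiff g \<longrightarrow> strictly_convex_on_ext C g)"

definition legendre_fun :: "('a::euclidean_space \<Rightarrow> ereal) \<Rightarrow> bool" where
  "legendre_fun g \<longleftrightarrow> essentially_smooth g \<and> essentially_strictly_convex g"

definition isometric_linear_action ::
  "('g, 'm) monoid_scheme \<Rightarrow> ('g \<Rightarrow> 'x::euclidean_space \<Rightarrow> 'x) \<Rightarrow> bool" where
  "isometric_linear_action G act \<longleftrightarrow> group G \<and>
     (\<forall>s\<in>carrier G. linear (act s) \<and> (\<forall>x. norm (act s x) = norm x)) \<and>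
     (\<forall>s\<in>carrier G. \<forall>t\<in>carrier G. \<forall>x. act (s \<otimes>\<^bsub>G\<^esub> t) x = act s (act t x)) \<and>
     (\<forall>x. act \<one>\<^bsub>G\<^esub> x = x)"

definition orbit :: "('g, 'm) monoid_scheme \<Rightarrow> ('g \<Rightarrow> 'x \<Rightarrow> 'x) \<Rightarrow> 'x \<Rightarrow> 'x set" where
  "orbit G act x = {act s x | s. s \<in> carrier G}"

definition invariant_under ::
  "('g, 'm) monoid_scheme \<Rightarrow> ('g \<Rightarrow> 'x \<Rightarrow> 'x) \<Rightarrow> ('x \<Rightarrow> 'b) \<Rightarrow> bool" where
  "invariant_under G act f \<longleftrightarrow> (\<forall>s\<in>carrier G. \<forall>x. f (act s x) = f x)"

(* (X, S, gamma, (Lambda_a)_{a in A}) is a spectral decomposition system for H;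
   the index set A is the type 'i *)
definition spectral_decomposition_system ::
  "('g, 'm) monoid_scheme \<Rightarrow> ('g \<Rightarrow> 'x::euclidean_space \<Rightarrow> 'x) \<Rightarrow>
   ('h::euclidean_space \<Rightarrow> 'x) \<Rightarrow> ('i \<Rightarrow> 'x \<Rightarrow> 'h) \<Rightarrow> bool" where
  "spectral_decomposition_system G act \<gamma> \<Lambda> \<longleftrightarrow>
     isometric_linear_action G act \<and>
     (\<forall>a. linear (\<Lambda> a)) \<and>
     (\<forall>a. \<forall>x. norm (\<Lambda> a x) = norm x) \<and>
     (\<exists>\<tau>. invariant_under G act \<tau> \<and> (\<forall>x. \<tau> x \<in> orbit G act x) \<and> (\<forall>a. \<gamma> \<circ> \<Lambda> a = \<tau>)) \<and>
     (\<forall>X. \<exists>a. X = \<Lambda> a (\<gamma> X)) \<and>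
     (\<forall>X Y. inner X Y \<le> inner (\<gamma> X) (\<gamma> Y))"

end

theory Submission
  imports Defs
begin

lemma lin_iso_inner:
  assumes "linear f" "\<And>x. norm (f x) = norm x"
  shows "inner (f x) (f y) = inner x y"
proof -
  have "f (x + y) = f x + f y" using assms(1) by (simp add: linear_add)
  then show ?thesis using assms(2)[of "x+y"] assms(2)[of x] assms(2)[of y]
    by (simp add: dot_norm[of "f x" "f y"] dot_norm[of x y])
qed

lemma subdiff_fin:
  assumes "proper_fun g" "u \<in> subdiff g x"
  shows "\<exists>a. g x = ereal a"
proof -
  obtain z where z: "g z \<noteq> \<infinity>" using assms(1) by (auto simp: proper_fun_def)
  have "g x \<noteq> -\<infinity>" using assms(1) by (auto simp: proper_fun_def)
  moreover have "g x \<noteq> \<infinity>"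
  proof
    assume "g x = \<infinity>"
    then have "ereal (inner (z - x) u) + g x = \<infinity>" by simp
    with assms(2) z show False by (auto simp: subdiff_def dest!: spec[of _ z])
  qed
  ultimately show ?thesis by (cases "g x") auto
qed

lemma convex_ineq:
  assumes "convex_fun g" "g x \<le> ereal a" "g y \<le> ereal b" "0 \<le> t" "t \<le> 1"
  shows "g ((1 - t) *\<^sub>R x + t *\<^sub>R y) \<le> ereal ((1 - t) * a + t * b)"
proof -
  have c: "convex {(x, r::real). g x \<le> ereal r}" using assms(1) by (simp add: convex_fun_def)
  have "(1 - t) *\<^sub>R (x, a) + t *\<^sub>R (y, b) \<in> {(x, r::real). g x \<le> ereal r}"
    by (rule convexD[OF c]) (use assms in auto)
  then show ?thesis by simp
qed

definition Dprop :: "('a::real_inner \<Rightarrow> ereal) \<Rightarrow> bool" where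
  "Dprop g \<longleftrightarrow> (\<forall>x y u. u \<in> subdiff g x \<longrightarrow> u \<in> subdiff g y \<longrightarrow> x = y)"

lemma esc_imp_D:
  fixes g :: "'a::euclidean_space \<Rightarrow> ereal"
  assumes "essentially_strictly_convex g"
  shows "Dprop g"
  unfolding Dprop_def
proof (intro allI impI, rule ccontr)
  fix x y G
  assume Gx: "G \<in> subdiff g x" and Gy: "G \<in> subdiff g y" and ne: "x \<noteq> y"
  have g0: "g \<in> Gamma0" using assms by (simp add: essentially_strictly_convex_def)
  then have pr: "proper_fun g" and cv: "convex_fun g" by (auto simp: Gamma0_def)
  obtain a where a: "g x = ereal a" using subdiff_fin[OF pr Gx] by blast
  obtain b where b: "g y = ereal b" using subdiff_fin[OF pr Gy] by blast
  have sx: "\<And>w. ereal (inner (w - x) G) + g x \<le> g w" using Gx by (simp add: subdiff_def)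
  have sy: "\<And>w. ereal (inner (w - y) G) + g y \<le> g w" using Gy by (simp add: subdiff_def)
  have "inner (y - x) G + a \<le> b" using sx[of y] a b by simp
  moreover have "inner (x - y) G + b \<le> a" using sy[of x] a b by simp
  ultimately have ab: "a - inner x G = b - inner y G" by (simp add: inner_diff_left)
  have seg: "g ((1 - t) *\<^sub>R x + t *\<^sub>R y) = ereal ((1 - t) * a + t * b)
        \<and> G \<in> subdiff g ((1 - t) *\<^sub>R x + t *\<^sub>R y)" if t: "0 \<le> t" "t \<le> 1" for t
  proof -
    let ?z = "(1 - t) *\<^sub>R x + t *\<^sub>R y"
    have iz: "inner ?z G = (1 - t) * inner x G + t * inner y G" by (simp add: inner_add_left)
    have bb: "b = a - inner x G + inner y G" using ab by simp
    have e: "inner (?z - x) G + a = (1 - t) * a + t * b"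
      using iz by (simp add: bb inner_diff_left algebra_simps)
    have le: "g ?z \<le> ereal ((1 - t) * a + t * b)" using convex_ineq[OF cv _ _ t] a b by simp
    have ge: "ereal ((1 - t) * a + t * b) \<le> g ?z" using sx[of ?z] a e by simp
    have eq: "g ?z = ereal ((1 - t) * a + t * b)" using le ge by simp
    have "G \<in> subdiff g ?z"
      unfolding subdiff_def
    proof (intro CollectI allI)
      fix w
      have "inner (w - ?z) G + ((1 - t) * a + t * b) = inner (w - x) G + a"
        using e by (simp add: inner_diff_left)
      then show "ereal (inner (w - ?z) G) + g ?z \<le> g w" using sx[of w] eq a by simp
    qed
    with eq show ?thesis by simp
  qed
  have C: "convex (closed_segment x y)" by simp
  have sub: "closed_segment x y \<subseteq> dom_subdiff g"
    using seg by (auto simp: closed_segment_def dom_subdiff_def)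
  have "strictly_convex_on_ext (closed_segment x y) g"
    using assms C sub by (simp add: essentially_strictly_convex_def)
  then have H: "\<forall>xa\<in>closed_segment x y. \<forall>ya\<in>closed_segment x y. \<forall>t::real. xa \<noteq> ya \<and> 0 < t \<and> t < 1 \<longrightarrow>
        g (t *\<^sub>R xa + (1 - t) *\<^sub>R ya) < ereal t * g xa + ereal (1 - t) * g ya"
    unfolding strictly_convex_on_ext_def .
  have "g ((1/2) *\<^sub>R x + (1 - 1/2) *\<^sub>R y) < ereal (1/2) * g x + ereal (1 - 1/2) * g y"
    by (rule H[rule_format]) (use ne in auto)
  moreover have "(1/2::real) *\<^sub>R x + (1 - 1/2) *\<^sub>R y = (1 - 1/2) *\<^sub>R x + (1/2) *\<^sub>R y" by simp
  ultimately have "ereal ((1 - 1/2) * a + (1/2) * b) < ereal (1/2) * ereal a + ereal (1 - 1/2) * ereal b"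
    using seg[of "1/2"] a b by simp
  then show False by simp
qed

lemma D_imp_esc:
  fixes g :: "'a::euclidean_space \<Rightarrow> ereal"
  assumes g0: "g \<in> Gamma0" and D: "Dprop g"
  shows "essentially_strictly_convex g"
  unfolding essentially_strictly_convex_def
proof (intro conjI g0 allI impI)
  fix C assume CC: "convex C \<and> C \<subseteq> dom_subdiff g"
  have pr: "proper_fun g" using g0 by (auto simp: Gamma0_def)
  show "strictly_convex_on_ext C g"
    unfolding strictly_convex_on_ext_def
  proof (intro ballI allI impI, rule ccontr)
    fix x y and t :: real
    assume x: "x \<in> C" and y: "y \<in> C" and h: "x \<noteq> y \<and> 0 < t \<and> t < 1"
    let ?z = "t *\<^sub>R x + (1 - t) *\<^sub>R y"
    assume nlt: "\<not> g ?z < ereal t * g x + ereal (1 - t) * g y"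
    have z: "?z \<in> C" using CC x y h by (intro convexD) auto
    obtain u where ux: "u \<in> subdiff g x" using x CC by (auto simp: dom_subdiff_def)
    obtain v where vy: "v \<in> subdiff g y" using y CC by (auto simp: dom_subdiff_def)
    obtain G where Gz: "G \<in> subdiff g ?z" using z CC by (auto simp: dom_subdiff_def)
    obtain a where a: "g x = ereal a" using subdiff_fin[OF pr ux] by blast
    obtain b where b: "g y = ereal b" using subdiff_fin[OF pr vy] by blast
    obtain c where c: "g ?z = ereal c" using subdiff_fin[OF pr Gz] by blast
    have sz: "\<And>w. ereal (inner (w - ?z) G) + ereal c \<le> g w" using Gz c by (simp add: subdiff_def)
    have ce: "t * a + (1 - t) * b \<le> c" using nlt a b c by simp
    define p where "p = a - c - inner (x - ?z) G"
    define q where "q = b - c - inner (y - ?z) G"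
    have p0: "0 \<le> p" using sz[of x] a by (simp add: p_def)
    have q0: "0 \<le> q" using sz[of y] b by (simp add: q_def)
    have "t * inner (x - ?z) G + (1 - t) * inner (y - ?z) G = 0"
      by (simp add: inner_diff_left inner_add_left algebra_simps)
    then have "t * p + (1 - t) * q \<le> 0" using ce by (simp add: p_def q_def algebra_simps)
    moreover have "0 \<le> t * p" "0 \<le> (1 - t) * q" using p0 q0 h by auto
    ultimately have "t * p = 0" "(1 - t) * q = 0" by linarith+
    then have pq: "p = 0" "q = 0" using h by auto
    have "G \<in> subdiff g x"
      unfolding subdiff_def
    proof (intro CollectI allI)
      fix w
      have "inner (w - x) G + a = inner (w - ?z) G + c"
        using pq(1) by (simp add: p_def inner_diff_left)
      then show "ereal (inner (w - x) G) + g x \<le> g w" using sz[of w] a by simp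
    qed
    moreover have "G \<in> subdiff g y"
      unfolding subdiff_def
    proof (intro CollectI allI)
      fix w
      have "inner (w - y) G + b = inner (w - ?z) G + c"
        using pq(2) by (simp add: q_def inner_diff_left)
      then show "ereal (inner (w - y) G) + g y \<le> g w" using sz[of w] b by simp
    qed
    ultimately show False using D h by (auto simp: Dprop_def)
  qed
qed

lemma esc_iff_D:
  fixes g :: "'a::euclidean_space \<Rightarrow> ereal"
  shows "essentially_strictly_convex g \<longleftrightarrow> g \<in> Gamma0 \<and> Dprop g"
  using esc_imp_D D_imp_esc by (auto simp: essentially_strictly_convex_def)

locale sdsloc =
  fixes G :: "('g, 'm) monoid_scheme"
    and act :: "'g \<Rightarrow> 'x::euclidean_space \<Rightarrow> 'x"
    and \<gamma> :: "'h::euclidean_space \<Rightarrow> 'x"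
    and \<Lambda> :: "'i \<Rightarrow> 'x \<Rightarrow> 'h"
    and \<phi> :: "'x \<Rightarrow> ereal"
    and \<tau> :: "'x \<Rightarrow> 'x"
  assumes grp: "group G"
    and lin_act: "\<And>s. s \<in> carrier G \<Longrightarrow> linear (act s)"
    and norm_act: "\<And>s x. s \<in> carrier G \<Longrightarrow> norm (act s x) = norm x"
    and act_mult: "\<And>s t x. s \<in> carrier G \<Longrightarrow> t \<in> carrier G \<Longrightarrow> act (s \<otimes>\<^bsub>G\<^esub> t) x = act s (act t x)"
    and act_one: "\<And>x. act \<one>\<^bsub>G\<^esub> x = x"
    and linL: "\<And>a. linear (\<Lambda> a)"
    and normL: "\<And>a x. norm (\<Lambda> a x) = norm x"
    and tau_orb: "\<And>x. \<tau> x \<in> orbit G act x"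
    and gL: "\<And>a x. \<gamma> (\<Lambda> a x) = \<tau> x"
    and decomp: "\<And>X. \<exists>a. X = \<Lambda> a (\<gamma> X)"
    and ineq: "\<And>X Y. inner X Y \<le> inner (\<gamma> X) (\<gamma> Y)"
    and phiG: "\<phi> \<in> Gamma0"
    and phi_inv: "\<And>s x. s \<in> carrier G \<Longrightarrow> \<phi> (act s x) = \<phi> x"
begin

lemma innerL: "inner (\<Lambda> a x) (\<Lambda> a y) = inner x y"
  by (rule lin_iso_inner[OF linL normL])

lemma inner_act: "s \<in> carrier G \<Longrightarrow> inner (act s x) (act s y) = inner x y"
  by (rule lin_iso_inner[OF lin_act norm_act])

lemma tau_ex: "\<exists>s\<in>carrier G. \<gamma> (\<Lambda> a x) = act s x"
  using tau_orb[of x] by (auto simp: orbit_def gL)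

lemma phi_gL: "\<phi> (\<gamma> (\<Lambda> a x)) = \<phi> x"
  using tau_ex[of a x] phi_inv by auto

lemma inner_act_inv:
  assumes "s \<in> carrier G"
  shows "inner w (act s u) = inner (act (inv\<^bsub>G\<^esub> s) w) u"
proof -
  have i: "inv\<^bsub>G\<^esub> s \<in> carrier G" using grp assms by (simp add: group.inv_closed)
  have "act s (act (inv\<^bsub>G\<^esub> s) w) = w"
    using act_mult[OF assms i, of w, symmetric] grp assms by (simp add: group.r_inv act_one)
  then have "inner w (act s u) = inner (act s (act (inv\<^bsub>G\<^esub> s) w)) (act s u)" by simp
  also have "\<dots> = inner (act (inv\<^bsub>G\<^esub> s) w) u" using inner_act[OF assms] .
  finally show ?thesis .
qed

lemma norm_gamma: "norm (\<gamma> X) = norm X"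
proof -
  obtain a where a: "X = \<Lambda> a (\<gamma> X)" using decomp by blast
  have "norm X = norm (\<Lambda> a (\<gamma> X))" using a by (rule arg_cong)
  then show ?thesis by (simp only: normL)
qed

lemma gamma_lip: "dist (\<gamma> X) (\<gamma> Y) \<le> dist X Y"
proof -
  have sq: "(norm (a - b))\<^sup>2 = (norm a)\<^sup>2 + (norm b)\<^sup>2 - 2 * inner a b" for a b :: "'z::real_inner"
    by (simp add: power2_norm_eq_inner inner_diff_left inner_diff_right inner_commute[of b a])
  have "(norm (\<gamma> X - \<gamma> Y))\<^sup>2 \<le> (norm (X - Y))\<^sup>2"
    unfolding sq norm_gamma using ineq[of X Y] by linarith
  then have "norm (\<gamma> X - \<gamma> Y) \<le> norm (X - Y)"
    by (rule power2_le_imp_le[OF _ norm_ge_zero])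
  then show ?thesis by (simp only: dist_norm)
qed

lemma gamma_cont: "continuous (at X) \<gamma>"
  unfolding continuous_at_eps_delta
proof (intro allI impI)
  fix e :: real assume "0 < e"
  show "\<exists>d>0. \<forall>x'. dist x' X < d \<longrightarrow> dist (\<gamma> x') (\<gamma> X) < e"
    using \<open>0 < e\<close> gamma_lip le_less_trans by blast
qed

lemma phi_props: "proper_fun \<phi>" "lsc_fun \<phi>" "convex_fun \<phi>"
  using phiG by (auto simp: Gamma0_def)

lemma inv_in: "s \<in> carrier G \<Longrightarrow> inv\<^bsub>G\<^esub> s \<in> carrier G"
  using grp by (simp add: group.inv_closed)

lemma lemmaK:
  assumes h: "\<And>U. \<exists>s\<in>carrier G. inner p U \<le> inner (act s q) U"
  shows "\<phi> p \<le> \<phi> q"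
proof (cases "\<phi> q")
  case PInf then show ?thesis by simp
next
  case MInf then show ?thesis using phi_props(1) by (simp add: proper_fun_def)
next
  case (real c)
  let ?S = "{w. \<phi> w \<le> ereal c}"
  have cl: "closed ?S" using phi_props(2) by (simp add: lsc_fun_def)
  have cv: "convex ?S"
  proof (rule convexI)
    fix x y :: 'x and u v :: real
    assume "x \<in> ?S" "y \<in> ?S" "0 \<le> u" "0 \<le> v" "u + v = 1"
    then have "\<phi> ((1 - v) *\<^sub>R x + v *\<^sub>R y) \<le> ereal ((1 - v) * c + v * c)"
      by (intro convex_ineq[OF phi_props(3)]) auto
    moreover have "(1 - v) * c + v * c = c" by (simp add: algebra_simps)
    moreover have "1 - v = u" using \<open>u + v = 1\<close> by simp
    ultimately show "u *\<^sub>R x + v *\<^sub>R y \<in> ?S" by simp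
  qed
  show ?thesis
  proof (rule ccontr)
    assume "\<not> \<phi> p \<le> \<phi> q"
    then have "p \<notin> ?S" using real by simp
    then obtain a b where ab: "inner a p < b" "\<forall>x\<in>?S. b < inner a x"
      using separating_hyperplane_closed_point[OF cv cl] by blast
    obtain s where s: "s \<in> carrier G" "inner p (- a) \<le> inner (act s q) (- a)" using h by blast
    have "act s q \<in> ?S" using s(1) phi_inv real by simp
    then have "b < inner a (act s q)" using ab(2) by blast
    moreover have "inner a (act s q) \<le> inner a p" using s(2) by (simp add: inner_commute)
    ultimately show False using ab(1) by simp
  qed
qed

lemma convex_psi: "convex_fun (\<phi> \<circ> \<gamma>)"
  unfolding convex_fun_def
proof (rule convexI)
  fix x y :: "'h \<times> real" and u v :: real
  assume xS: "x \<in> {(X, r). (\<phi> \<circ> \<gamma>) X \<le> ereal r}" and yS: "y \<in> {(X, r). (\<phi> \<circ> \<gamma>) X \<le> ereal r}"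
    and u: "0 \<le> u" and v: "0 \<le> v" and uv: "u + v = 1"
  obtain X r where x: "x = (X, r)" by (cases x)
  obtain Y r' where y: "y = (Y, r')" by (cases y)
  have hx: "\<phi> (\<gamma> X) \<le> ereal r" using xS x by simp
  have hy: "\<phi> (\<gamma> Y) \<le> ereal r'" using yS y by simp
  let ?w = "u *\<^sub>R \<gamma> X + v *\<^sub>R \<gamma> Y"
  let ?Z = "u *\<^sub>R X + v *\<^sub>R Y"
  have "\<phi> ((1 - v) *\<^sub>R \<gamma> X + v *\<^sub>R \<gamma> Y) \<le> ereal ((1 - v) * r + v * r')"
    using convex_ineq[OF phi_props(3) hx hy v] uv u by simp
  moreover have "1 - v = u" using uv by simp
  ultimately have w: "\<phi> ?w \<le> ereal (u * r + v * r')" by simp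
  have "\<phi> (\<gamma> ?Z) \<le> \<phi> ?w"
  proof (rule lemmaK)
    fix U
    obtain a where a: "?Z = \<Lambda> a (\<gamma> ?Z)" using decomp by blast
    let ?V = "\<Lambda> a U"
    obtain s where s: "s \<in> carrier G" "\<gamma> ?V = act s U" using tau_ex by blast
    have "inner (\<gamma> ?Z) U = inner (\<Lambda> a (\<gamma> ?Z)) ?V" by (simp only: innerL)
    also have "\<dots> = inner ?Z ?V" by (simp only: a[symmetric])
    also have "\<dots> = u * inner X ?V + v * inner Y ?V" by (simp add: inner_add_left)
    also have "\<dots> \<le> u * inner (\<gamma> X) (\<gamma> ?V) + v * inner (\<gamma> Y) (\<gamma> ?V)"
      using ineq u v by (intro add_mono mult_left_mono) auto
    also have "\<dots> = inner ?w (\<gamma> ?V)" by (simp add: inner_add_left)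
    also have "\<dots> = inner (act (inv\<^bsub>G\<^esub> s) ?w) U" using s inner_act_inv by simp
    finally show "\<exists>s\<in>carrier G. inner (\<gamma> ?Z) U \<le> inner (act s ?w) U"
      using inv_in[OF s(1)] by blast
  qed
  with w have "\<phi> (\<gamma> ?Z) \<le> ereal (u * r + v * r')" by simp
  then show "u *\<^sub>R x + v *\<^sub>R y \<in> {(X, r). (\<phi> \<circ> \<gamma>) X \<le> ereal r}" using x y by simp
qed

lemma gamma0_psi: "\<phi> \<circ> \<gamma> \<in> Gamma0"
proof -
  obtain x where x: "\<phi> x \<noteq> \<infinity>" using phi_props(1) by (auto simp: proper_fun_def)
  have "proper_fun (\<phi> \<circ> \<gamma>)"
    unfolding proper_fun_def
  proof
    show "\<forall>X. (\<phi> \<circ> \<gamma>) X \<noteq> - \<infinity>" using phi_props(1) by (simp add: proper_fun_def)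
    show "\<exists>X. (\<phi> \<circ> \<gamma>) X \<noteq> \<infinity>"
      using x phi_gL[of undefined x] by (intro exI[of _ "\<Lambda> undefined x"]) simp
  qed
  moreover have "lsc_fun (\<phi> \<circ> \<gamma>)"
    unfolding lsc_fun_def
  proof
    fix c
    have "{X. (\<phi> \<circ> \<gamma>) X \<le> c} = \<gamma> -` {x. \<phi> x \<le> c}" by auto
    moreover have "closed {x. \<phi> x \<le> c}" using phi_props(2) by (simp add: lsc_fun_def)
    ultimately show "closed {X. (\<phi> \<circ> \<gamma>) X \<le> c}"
      using continuous_closed_vimage gamma_cont by metis
  qed
  ultimately show ?thesis using convex_psi by (simp add: Gamma0_def)
qed

lemma FA:
  assumes u: "u \<in> subdiff \<phi> x"
  shows "\<Lambda> a u \<in> subdiff (\<phi> \<circ> \<gamma>) (\<Lambda> a x)"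
  unfolding subdiff_def
proof (intro CollectI allI)
  fix Z
  obtain s where s: "s \<in> carrier G" "\<gamma> (\<Lambda> a u) = act s u" using tau_ex by blast
  let ?z = "act (inv\<^bsub>G\<^esub> s) (\<gamma> Z)"
  have "inner Z (\<Lambda> a u) \<le> inner (\<gamma> Z) (\<gamma> (\<Lambda> a u))" by (rule ineq)
  also have "\<dots> = inner ?z u" using s inner_act_inv by simp
  finally have i1: "inner (Z - \<Lambda> a x) (\<Lambda> a u) \<le> inner (?z - x) u"
    by (simp add: inner_diff_left innerL)
  have "ereal (inner (?z - x) u) + \<phi> x \<le> \<phi> ?z" using u by (simp add: subdiff_def)
  moreover have "\<phi> ?z = \<phi> (\<gamma> Z)" using phi_inv inv_in[OF s(1)] by simp
  moreover have "ereal (inner (Z - \<Lambda> a x) (\<Lambda> a u)) + \<phi> x \<le> ereal (inner (?z - x) u) + \<phi> x"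
    using i1 by (intro add_right_mono) simp
  ultimately show "ereal (inner (Z - \<Lambda> a x) (\<Lambda> a u)) + (\<phi> \<circ> \<gamma>) (\<Lambda> a x) \<le> (\<phi> \<circ> \<gamma>) Z"
    using phi_gL[of a x] by simp
qed

lemma FB:
  assumes Y: "Y \<in> subdiff (\<phi> \<circ> \<gamma>) X" and a: "X = \<Lambda> a (\<gamma> X)"
  shows "adjoint (\<Lambda> a) Y \<in> subdiff \<phi> (\<gamma> X)"
  unfolding subdiff_def
proof (intro CollectI allI)
  fix z
  have "inner (z - \<gamma> X) (adjoint (\<Lambda> a) Y) = inner (\<Lambda> a (z - \<gamma> X)) Y"
    by (rule adjoint_works[OF linL])
  also have "\<dots> = inner (\<Lambda> a z - X) Y"
    using a linear_diff[OF linL] by metis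
  finally have e: "inner (z - \<gamma> X) (adjoint (\<Lambda> a) Y) = inner (\<Lambda> a z - X) Y" .
  have "ereal (inner (\<Lambda> a z - X) Y) + \<phi> (\<gamma> X) \<le> \<phi> (\<gamma> (\<Lambda> a z))"
    using Y by (simp add: subdiff_def)
  then show "ereal (inner (z - \<gamma> X) (adjoint (\<Lambda> a) Y)) + \<phi> (\<gamma> X) \<le> \<phi> z"
    using e phi_gL by simp
qed

lemma FC:
  assumes Y: "Y \<in> subdiff (\<phi> \<circ> \<gamma>) X"
  shows "inner X Y = inner (\<gamma> X) (\<gamma> Y)" "\<gamma> Y \<in> subdiff \<phi> (\<gamma> X)"
proof -
  have pr: "proper_fun (\<phi> \<circ> \<gamma>)" using gamma0_psi by (simp add: Gamma0_def)
  obtain m where m: "\<phi> (\<gamma> X) = ereal m" using subdiff_fin[OF pr Y] by auto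
  obtain c where c: "Y = \<Lambda> c (\<gamma> Y)" using decomp by blast
  have sY: "\<And>Z. ereal (inner (Z - X) Y) + \<phi> (\<gamma> X) \<le> \<phi> (\<gamma> Z)"
    using Y by (simp add: subdiff_def)
  have iZ: "inner (\<Lambda> c z) Y = inner z (\<gamma> Y)" for z
  proof -
    have "inner (\<Lambda> c z) Y = inner (\<Lambda> c z) (\<Lambda> c (\<gamma> Y))" using c by (rule arg_cong)
    then show ?thesis by (simp only: innerL)
  qed
  have "ereal (inner (\<Lambda> c (\<gamma> X) - X) Y) + \<phi> (\<gamma> X) \<le> \<phi> (\<gamma> X)"
    using sY[of "\<Lambda> c (\<gamma> X)"] phi_gL by simp
  then have "inner (\<Lambda> c (\<gamma> X) - X) Y \<le> 0" using m by simp
  then have "inner (\<gamma> X) (\<gamma> Y) \<le> inner X Y" using iZ by (simp add: inner_diff_left)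
  then show eq: "inner X Y = inner (\<gamma> X) (\<gamma> Y)" using ineq[of X Y] by simp
  show "\<gamma> Y \<in> subdiff \<phi> (\<gamma> X)"
    unfolding subdiff_def
  proof (intro CollectI allI)
    fix z
    have "inner (\<Lambda> c z - X) Y = inner (z - \<gamma> X) (\<gamma> Y)"
      using iZ eq by (simp add: inner_diff_left)
    then show "ereal (inner (z - \<gamma> X) (\<gamma> Y)) + \<phi> (\<gamma> X) \<le> \<phi> z"
      using sY[of "\<Lambda> c z"] phi_gL by simp
  qed
qed

lemma NL:
  assumes "norm (adjoint (\<Lambda> a) Y) = norm Y"
  shows "Y = \<Lambda> a (adjoint (\<Lambda> a) Y)"
proof -
  let ?w = "adjoint (\<Lambda> a) Y"
  have i: "inner Y (\<Lambda> a ?w) = (norm ?w)\<^sup>2"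
    using adjoint_works[OF linL, of ?w a Y] by (simp add: inner_commute power2_norm_eq_inner)
  have sq: "(norm (p - q))\<^sup>2 = (norm p)\<^sup>2 + (norm q)\<^sup>2 - 2 * inner p q" for p q :: 'h
    by (simp add: power2_norm_eq_inner inner_diff_left inner_diff_right inner_commute[of q p])
  have "(norm (Y - \<Lambda> a ?w))\<^sup>2 = 0" unfolding sq i normL assms by simp
  then show ?thesis by simp
qed

lemma L_inj: "\<Lambda> a x = \<Lambda> a y \<Longrightarrow> x = y"
proof -
  assume "\<Lambda> a x = \<Lambda> a y"
  then have "\<Lambda> a (x - y) = 0" using linear_diff[OF linL] by simp
  then have "norm (x - y) = 0" using normL[of a "x - y"] by simp
  then show "x = y" by simp
qed

lemma smooth_iff: "essentially_smooth (\<phi> \<circ> \<gamma>) \<longleftrightarrow> essentially_smooth \<phi>"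
proof
  assume h: "essentially_smooth (\<phi> \<circ> \<gamma>)"
  show "essentially_smooth \<phi>"
    unfolding essentially_smooth_def
  proof (intro conjI phiG allI ballI)
    fix x u v assume "u \<in> subdiff \<phi> x" "v \<in> subdiff \<phi> x"
    then have "\<Lambda> undefined u \<in> subdiff (\<phi> \<circ> \<gamma>) (\<Lambda> undefined x)"
      "\<Lambda> undefined v \<in> subdiff (\<phi> \<circ> \<gamma>) (\<Lambda> undefined x)" using FA by auto
    then have "\<Lambda> undefined u = \<Lambda> undefined v" using h by (auto simp: essentially_smooth_def)
    then show "u = v" by (rule L_inj)
  qed
next
  assume h: "essentially_smooth \<phi>"
  show "essentially_smooth (\<phi> \<circ> \<gamma>)"
    unfolding essentially_smooth_def
  proof (intro conjI gamma0_psi allI ballI)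
    fix X Y1 Y2 assume Y1: "Y1 \<in> subdiff (\<phi> \<circ> \<gamma>) X" and Y2: "Y2 \<in> subdiff (\<phi> \<circ> \<gamma>) X"
    obtain a where a: "X = \<Lambda> a (\<gamma> X)" using decomp by blast
    have u: "\<And>u v. u \<in> subdiff \<phi> (\<gamma> X) \<Longrightarrow> v \<in> subdiff \<phi> (\<gamma> X) \<Longrightarrow> u = v"
      using h by (auto simp: essentially_smooth_def)
    have e1: "adjoint (\<Lambda> a) Y1 = \<gamma> Y1" using u FB[OF Y1 a] FC(2)[OF Y1] by blast
    have e2: "adjoint (\<Lambda> a) Y2 = \<gamma> Y2" using u FB[OF Y2 a] FC(2)[OF Y2] by blast
    have e3: "\<gamma> Y1 = \<gamma> Y2" using u FC(2)[OF Y1] FC(2)[OF Y2] by blast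
    have h1: "Y1 = \<Lambda> a (adjoint (\<Lambda> a) Y1)" using e1 norm_gamma by (intro NL) simp
    have h2: "Y2 = \<Lambda> a (adjoint (\<Lambda> a) Y2)" using e2 norm_gamma by (intro NL) simp
    have "Y1 = \<Lambda> a (adjoint (\<Lambda> a) Y1)" by (rule h1)
    also have "\<dots> = \<Lambda> a (\<gamma> Y1)" by (simp only: e1)
    also have "\<dots> = \<Lambda> a (\<gamma> Y2)" by (simp only: e3)
    also have "\<dots> = \<Lambda> a (adjoint (\<Lambda> a) Y2)" by (simp only: e2)
    also have "\<dots> = Y2" by (rule h2[symmetric])
    finally show "Y1 = Y2" .
  qed
qed

lemma key2:
  assumes D: "Dprop \<phi>" and GX: "G' \<in> subdiff (\<phi> \<circ> \<gamma>) X" and c: "G' = \<Lambda> c (\<gamma> G')"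
  shows "X = \<Lambda> c (\<gamma> X)"
proof -
  let ?x = "adjoint (\<Lambda> c) X"
  let ?g = "\<gamma> G'"
  have g0: "?g \<in> subdiff \<phi> (\<gamma> X)" by (rule FC(2)[OF GX])
  have "inner ?g ?x = inner (\<Lambda> c ?g) X" by (rule adjoint_works[OF linL])
  also have "\<dots> = inner X G'" unfolding c[symmetric] by (rule inner_commute)
  also have "\<dots> = inner (\<gamma> X) ?g" by (rule FC(1)[OF GX])
  finally have F: "inner ?g ?x = inner (\<gamma> X) ?g" .
  have "inner (?x - \<gamma> X) ?g = inner ?g (?x - \<gamma> X)" by (rule inner_commute)
  also have "\<dots> = inner ?g ?x - inner ?g (\<gamma> X)" by (rule inner_diff_right)
  also have "\<dots> = 0" using F inner_commute[of "?g" "\<gamma> X"] by simp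
  finally have ig: "inner (?x - \<gamma> X) ?g = 0" .
  have le: "\<phi> ?x \<le> \<phi> (\<gamma> X)"
  proof (rule lemmaK)
    fix U
    obtain s where s: "s \<in> carrier G" "\<gamma> (\<Lambda> c U) = act s U" using tau_ex by blast
    have "inner ?x U = inner (\<Lambda> c U) X"
      using adjoint_works[OF linL, of U c X] by (simp add: inner_commute)
    also have "\<dots> \<le> inner (\<gamma> (\<Lambda> c U)) (\<gamma> X)" by (rule ineq)
    also have "\<dots> = inner (\<gamma> X) (act s U)" using s by (simp add: inner_commute)
    also have "\<dots> = inner (act (inv\<^bsub>G\<^esub> s) (\<gamma> X)) U" using s inner_act_inv by simp
    finally show "\<exists>s\<in>carrier G. inner ?x U \<le> inner (act s (\<gamma> X)) U"
      using inv_in[OF s(1)] by blast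
  qed
  have "ereal (inner (?x - \<gamma> X) ?g) + \<phi> (\<gamma> X) \<le> \<phi> ?x" using g0 by (simp add: subdiff_def)
  then have ge: "\<phi> (\<gamma> X) \<le> \<phi> ?x" using ig by simp
  have eq: "\<phi> ?x = \<phi> (\<gamma> X)" using le ge by simp
  have "?g \<in> subdiff \<phi> ?x"
    unfolding subdiff_def
  proof (intro CollectI allI)
    fix z
    have "inner (z - ?x) ?g = inner (z - \<gamma> X) ?g" using ig by (simp add: inner_diff_left)
    then show "ereal (inner (z - ?x) ?g) + \<phi> ?x \<le> \<phi> z"
      using g0 eq by (simp add: subdiff_def)
  qed
  then have "?x = \<gamma> X" using D g0 by (auto simp: Dprop_def)
  then have "X = \<Lambda> c ?x" using norm_gamma by (intro NL) simp
  then show ?thesis unfolding \<open>?x = \<gamma> X\<close> .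
qed

lemma D_iff: "Dprop (\<phi> \<circ> \<gamma>) \<longleftrightarrow> Dprop \<phi>"
proof
  assume h: "Dprop (\<phi> \<circ> \<gamma>)"
  show "Dprop \<phi>"
    unfolding Dprop_def
  proof (intro allI impI)
    fix x y u assume "u \<in> subdiff \<phi> x" "u \<in> subdiff \<phi> y"
    then have "\<Lambda> undefined u \<in> subdiff (\<phi> \<circ> \<gamma>) (\<Lambda> undefined x)"
      "\<Lambda> undefined u \<in> subdiff (\<phi> \<circ> \<gamma>) (\<Lambda> undefined y)" using FA by auto
    then have "\<Lambda> undefined x = \<Lambda> undefined y" using h by (auto simp: Dprop_def)
    then show "x = y" by (rule L_inj)
  qed
next
  assume h: "Dprop \<phi>"
  show "Dprop (\<phi> \<circ> \<gamma>)"
    unfolding Dprop_def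
  proof (intro allI impI)
    fix X Y G' assume GX: "G' \<in> subdiff (\<phi> \<circ> \<gamma>) X" and GY: "G' \<in> subdiff (\<phi> \<circ> \<gamma>) Y"
    obtain c where c: "G' = \<Lambda> c (\<gamma> G')" using decomp by blast
    have e: "\<gamma> X = \<gamma> Y" using h FC(2)[OF GX] FC(2)[OF GY] unfolding Dprop_def by blast
    have "X = \<Lambda> c (\<gamma> X)" by (rule key2[OF h GX c])
    also have "\<dots> = \<Lambda> c (\<gamma> Y)" by (simp only: e)
    also have "\<dots> = Y" by (rule key2[OF h GY c, symmetric])
    finally show "X = Y" .
  qed
qed

lemma esc_iff: "essentially_strictly_convex (\<phi> \<circ> \<gamma>) \<longleftrightarrow> essentially_strictly_convex \<phi>"
  unfolding esc_iff_D using D_iff gamma0_psi phiG by simp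

end

theorem proposition6p1:
  fixes G :: "('g, 'm) monoid_scheme"
    and act :: "'g \<Rightarrow> 'x::euclidean_space \<Rightarrow> 'x"
    and \<gamma> :: "'h::euclidean_space \<Rightarrow> 'x"
    and \<Lambda> :: "'i \<Rightarrow> 'x \<Rightarrow> 'h"
    and \<phi> :: "'x \<Rightarrow> ereal"
  assumes "spectral_decomposition_system G act \<gamma> \<Lambda>"
    and "\<phi> \<in> Gamma0"
    and "invariant_under G act \<phi>"
  shows "(essentially_smooth (\<phi> \<circ> \<gamma>) \<longleftrightarrow> essentially_smooth \<phi>)
    \<and> (essentially_strictly_convex (\<phi> \<circ> \<gamma>) \<longleftrightarrow> essentially_strictly_convex \<phi>)
    \<and> (legendre_fun (\<phi> \<circ> \<gamma>) \<longleftrightarrow> legendre_fun \<phi>)"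
proof -
  obtain \<tau> where tau: "invariant_under G act \<tau>" "\<forall>x. \<tau> x \<in> orbit G act x" "\<forall>a. \<gamma> \<circ> \<Lambda> a = \<tau>"
    using assms(1) by (auto simp: spectral_decomposition_system_def)
  have gl: "\<And>a x. \<gamma> (\<Lambda> a x) = \<tau> x" using tau(3) by (metis comp_apply)
  have "sdsloc G act \<gamma> \<Lambda> \<phi> \<tau>"
  proof -
    have A: "isometric_linear_action G act" "\<forall>a. linear (\<Lambda> a)" "\<forall>a x. norm (\<Lambda> a x) = norm x"
      "\<forall>X. \<exists>a. X = \<Lambda> a (\<gamma> X)" "\<forall>X Y. inner X Y \<le> inner (\<gamma> X) (\<gamma> Y)"
      using assms(1) unfolding spectral_decomposition_system_def by blast+
    have B: "group G" "\<forall>s\<in>carrier G. linear (act s) \<and> (\<forall>x. norm (act s x) = norm x)"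
      "\<forall>s\<in>carrier G. \<forall>t\<in>carrier G. \<forall>x. act (s \<otimes>\<^bsub>G\<^esub> t) x = act s (act t x)"
      "\<forall>x. act \<one>\<^bsub>G\<^esub> x = x"
      using A(1) unfolding isometric_linear_action_def by blast+
    have C: "\<forall>s\<in>carrier G. \<forall>x. \<phi> (act s x) = \<phi> x"
      using assms(3) unfolding invariant_under_def by blast
    show ?thesis
      unfolding sdsloc_def
      using A(2-5) B C tau(2) gl assms(2) by blast
  qed
  then interpret sdsloc G act \<gamma> \<Lambda> \<phi> \<tau> .
  show ?thesis using smooth_iff esc_iff by (simp add: legendre_fun_def)
qed

end
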